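(* Let $\alpha>-1$ and $\beta>0$. For every $\Phi\in\mathcal{C}^*_{\zeta}([0,\infty))$, $$\lim_{\eta\to\infty}\|\mathcal{R}_{\eta}^{(\alpha,\beta)}(\Phi;\cdot)-\Phi\|_{\zeta}=0.$$
   Context: The generalized Laguerre polynomials are $\mathcal{L}_k^{(\alpha)}(t)=\sum_{i=0}^{k}\frac{(-1)^i}{i!}\binom{k+\alpha}{k-i}t^i$. Put $p_{\eta,k}(x)=e^{-\eta x/2}2^{-\alpha-1}2^{-k}\mathcal{L}_k^{(\alpha)}(-\eta x/2)$ and, for $k\ge1$, $z>0$, $\mathcal{I}_{k,\eta}^{\beta}(z)=\frac{\eta\beta e^{-\eta\beta z}(\eta\beta z)^{k\beta-1}}{\Gamma(k\beta)}$. The operator is $\mathcal{R}_{\eta}^{(\alpha,\beta)}(\Phi;x)=p_{\eta,0}(x)\Phi(0)+\sum_{k=1}^{\infty}p_{\eta,k}(x)\int_0^\infty\mathcal{I}_{k,\eta}^{\beta}(z)\Phi(z)\,dz$, $\eta>0$. Let $\zeta(x)=1+x^2$. $\mathcal{B}_\zeta([0,\infty))$ is the space of $\Phi:[0,\infty)\to\mathbb{R}$ with $|\Phi(x)|\le M_\Phi\zeta(x)$ for some constant $M_\Phi$, normed by $\|\Phi\|_\zeta=\sup_{x\ge0}|\Phi(x)|/\zeta(x)$; $\mathcal{C}_\zeta([0,\infty))$ is the subspace of continuous functions in $\mathcal{B}_\zeta([0,\infty))$, and $\mathcal{C}^*_\zeta([0,\infty))$ is the set of $\Phi\in\mathcal{C}_\zeta([0,\infty))$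 for which $\lim_{x\to\infty}\Phi(x)/\zeta(x)$ exists and is finite. *)

theory Defs
  imports "HOL-Analysis.Analysis"
begin

definition laguerre :: "nat \<Rightarrow> real \<Rightarrow> real \<Rightarrow> real" where
  "laguerre k \<alpha> t = (\<Sum>i=0..k. (-1)^i / fact i * ((real k + \<alpha>) gchoose (k - i)) * t ^ i)"

definition pbasis :: "real \<Rightarrow> real \<Rightarrow> nat \<Rightarrow> real \<Rightarrow> real" where
  "pbasis \<alpha> \<eta> k x = exp (- \<eta> * x / 2) * 2 powr (- \<alpha> - 1) * 2 powr (- real k)
      * laguerre k \<alpha> (- \<eta> * x / 2)"

definition Ikernel :: "real \<Rightarrow> nat \<Rightarrow> real \<Rightarrow> real \<Rightarrow> real" where
  "Ikernel \<beta> k \<eta> z = \<eta> * \<beta> * exp (- \<eta> * \<beta> * z) * (\<eta> * \<beta> * z) powr (real k * \<beta> - 1)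
      / Gamma (real k * \<beta>)"

definition Rop :: "real \<Rightarrow> real \<Rightarrow> real \<Rightarrow> (real \<Rightarrow> real) \<Rightarrow> real \<Rightarrow> real" where
  "Rop \<alpha> \<beta> \<eta> \<Phi> x = pbasis \<alpha> \<eta> 0 x * \<Phi> 0
     + (\<Sum>k. pbasis \<alpha> \<eta> (Suc k) x * (LINT z:{0<..}|lborel. Ikernel \<beta> (Suc k) \<eta> z * \<Phi> z))"

definition zeta :: "real \<Rightarrow> real" where
  "zeta x = 1 + x^2"

definition B_zeta :: "(real \<Rightarrow> real) set" where
  "B_zeta = {\<Phi>. \<exists>M. \<forall>x\<ge>0. \<bar>\<Phi> x\<bar> \<le> M * zeta x}"

definition C_zeta :: "(real \<Rightarrow> real) set" where
  "C_zeta = {\<Phi>. \<Phi> \<in> B_zeta \<and> continuous_on {0..} \<Phi>}"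

definition C_zeta_star :: "(real \<Rightarrow> real) set" where
  "C_zeta_star = {\<Phi>. \<Phi> \<in> C_zeta \<and> (\<exists>L. ((\<lambda>x. \<Phi> x / zeta x) \<longlongrightarrow> L) at_top)}"

definition zeta_norm :: "(real \<Rightarrow> real) \<Rightarrow> real" where
  "zeta_norm \<Phi> = (SUP x\<in>{0..}. \<bar>\<Phi> x\<bar> / zeta x)"

end

theory Submission
  imports Defs
begin


lemma fact_Suc_div: "real (Suc n) * (c / fact (Suc n)) = (c::real) / fact n"
  by (simp add: fact_Suc del: of_nat_Suc)

lemma sums_shift0:
  fixes f :: "nat \<Rightarrow> real"
  assumes "g sums V" "\<And>n. f (Suc n) = g n" "f 0 = 0"
  shows "f sums V"
proof -
  have "(\<lambda>n. f (Suc n)) = g" using assms(2) by (rule ext)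
  with assms(1) have "(\<lambda>n. f (Suc n)) sums V" by simp
  then show ?thesis using assms(3) by (simp add: sums_Suc_iff)
qed

lemma nb0:
  fixes b :: real assumes "b > 0"
  shows "(\<lambda>j. pochhammer b j / fact j * (1/2)^j) sums (2 powr b)"
proof -
  have "(\<lambda>n. ((-b) gchoose n) * (-1/2)^n) sums (1 + (-1/2)) powr (-b)"
    by (rule gen_binomial_real) simp
  moreover have "(1 + (-1/2::real)) powr (-b) = 2 powr b"
    by (simp add: powr_minus_divide powr_divide)
  moreover have "((-b) gchoose n) * (-1/2)^n = pochhammer b n / fact n * (1/2)^n" for n
  proof -
    have "((-b) gchoose n) = (-1)^n * pochhammer b n / fact n"
      by (simp add: gbinomial_pochhammer)
    moreover have "(-1/2::real)^n = (-1)^n * (1/2)^n"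
      by (simp add: power_mult_distrib[symmetric])
    ultimately show ?thesis
      by (simp add: power_mult_distrib[symmetric])
  qed
  ultimately show ?thesis by simp
qed

lemma nb1:
  fixes b :: real assumes "b > 0"
  shows "(\<lambda>j. real j * (pochhammer b j / fact j * (1/2)^j)) sums (b * 2 powr b)"
proof (rule sums_shift0)
  have "(\<lambda>n. b/2 * (pochhammer (b+1) n / fact n * (1/2)^n)) sums (b/2 * 2 powr (b+1))"
    using nb0[of "b+1"] assms by (intro sums_mult) simp
  moreover have eq: "b/2 * 2 powr (b+1) = b * 2 powr b"
    by (simp add: powr_add)
  ultimately show "(\<lambda>n. b/2 * (pochhammer (b+1) n / fact n * (1/2)^n)) sums (b * 2 powr b)" by (simp only: eq)
  fix n
  have "real (Suc n) * (pochhammer b (Suc n) / fact (Suc n) * (1/2)^(Suc n))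
     = (real (Suc n) * (pochhammer b (Suc n) / fact (Suc n))) * (1/2)^(Suc n)" by simp
  also have "\<dots> = pochhammer b (Suc n) / fact n * (1/2)^(Suc n)" by (simp only: fact_Suc_div)
  finally show "real (Suc n) * (pochhammer b (Suc n) / fact (Suc n) * (1/2)^(Suc n))
      = b/2 * (pochhammer (b+1) n / fact n * (1/2)^n)" by (simp add: pochhammer_rec field_simps)
qed simp

lemma nb2:
  fixes b :: real assumes "b > 0"
  shows "(\<lambda>j. (real j)^2 * (pochhammer b j / fact j * (1/2)^j)) sums (b * (b+2) * 2 powr b)"
proof (rule sums_shift0)
  have "(\<lambda>n. b/2 * (real n * (pochhammer (b+1) n / fact n * (1/2)^n) + pochhammer (b+1) n / fact n * (1/2)^n))
     sums (b/2 * ((b+1) * 2 powr (b+1) + 2 powr (b+1)))"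
    using nb0[of "b+1"] nb1[of "b+1"] assms by (intro sums_mult sums_add) simp_all
  moreover have eq: "b/2 * ((b+1) * 2 powr (b+1) + 2 powr (b+1)) = b * (b+2) * 2 powr b"
    by (simp add: powr_add field_simps)
  ultimately show "(\<lambda>n. b/2 * (real n * (pochhammer (b+1) n / fact n * (1/2)^n) + pochhammer (b+1) n / fact n * (1/2)^n))
     sums (b * (b+2) * 2 powr b)" by (simp only: eq)
  fix n
  have "(real (Suc n))^2 * (pochhammer b (Suc n) / fact (Suc n) * (1/2)^(Suc n))
     = real (Suc n) * (real (Suc n) * (pochhammer b (Suc n) / fact (Suc n))) * (1/2)^(Suc n)" by (simp add: power2_eq_square)
  also have "\<dots> = real (Suc n) * (pochhammer b (Suc n) / fact n) * (1/2)^(Suc n)" by (simp only: fact_Suc_div)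
  finally show "(real (Suc n))^2 * (pochhammer b (Suc n) / fact (Suc n) * (1/2)^(Suc n))
      = b/2 * (real n * (pochhammer (b+1) n / fact n * (1/2)^n) + pochhammer (b+1) n / fact n * (1/2)^n)"
    by (simp add: pochhammer_rec field_simps)
qed simp

lemma po0: "(\<lambda>i. s^i / fact i) sums exp (s::real)"
  using exp_converges[of s] by (simp add: divide_inverse mult.commute)

lemma po1: "(\<lambda>i. real i * (s^i / fact i)) sums (s * exp (s::real))"
proof (rule sums_shift0)
  show "(\<lambda>n. s * (s^n / fact n)) sums (s * exp s)" by (intro sums_mult po0)
  show "real (Suc n) * (s^Suc n / fact (Suc n)) = s * (s^n / fact n)" for n
    by (simp only: fact_Suc_div) simp
qed simp

lemma po2: "(\<lambda>i. (real i)^2 * (s^i / fact i)) sums ((s^2 + s) * exp (s::real))"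
proof (rule sums_shift0)
  have "(\<lambda>n. s * (real n * (s^n / fact n) + s^n / fact n)) sums (s * (s * exp s + exp s))"
    by (intro sums_mult sums_add po0 po1)
  moreover have "s * (s * exp s + exp s) = (s^2 + s) * exp s" by (simp add: algebra_simps power2_eq_square)
  ultimately show "(\<lambda>n. s * (real n * (s^n / fact n) + s^n / fact n)) sums ((s^2 + s) * exp s)" by simp
  fix n
  have "(real (Suc n))^2 * (s^Suc n / fact (Suc n)) = real (Suc n) * (real (Suc n) * (s^Suc n / fact (Suc n)))"
    by (simp add: power2_eq_square)
  also have "\<dots> = real (Suc n) * (s^Suc n / fact n)" by (simp only: fact_Suc_div)
  finally show "(real (Suc n))^2 * (s^Suc n / fact (Suc n)) = s * (real n * (s^n / fact n) + s^n / fact n)"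
    by (simp add: field_simps)
qed simp



lemma diag_sums:
  fixes F :: "nat \<Rightarrow> nat \<Rightarrow> real"
  assumes nn: "\<And>i j. F i j \<ge> 0" and inner: "\<And>i. F i sums G i" and outer: "G sums S"
  shows "(\<lambda>k. \<Sum>i\<le>k. F i (k-i)) sums S"
proof -
  have Gnn: "G i \<ge> 0" for i using inner[of i] nn by (metis sums_le sums_zero)
  have hi: "((\<lambda>j. (\<lambda>(i,j). F i j) (i, j)) has_sum G i) UNIV" for i
    using sums_nonneg_imp_has_sum[OF inner[of i]] nn by simp
  have ho: "(G has_sum S) UNIV" using sums_nonneg_imp_has_sum[OF outer] Gnn by simp
  have sm: "(\<lambda>(i,j). F i j) summable_on Sigma UNIV (\<lambda>_. UNIV)"
    by (rule summable_on_SigmaI[OF hi has_sum_imp_summable[OF ho]]) (simp add: nn)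
  have h2: "((\<lambda>(i,j). F i j) has_sum S) (Sigma UNIV (\<lambda>_::nat. UNIV::nat set))"
    by (rule has_sum_SigmaI[OF hi ho sm])
  have h3: "((\<lambda>(k,i). F i (k-i)) has_sum S) (Sigma UNIV (\<lambda>k. {..k}))"
    using h2
    by (subst has_sum_reindex_bij_witness[where i="\<lambda>(i,j). (i+j, i)" and j="\<lambda>(k,i). (i, k-i)"
          and T="Sigma UNIV (\<lambda>_::nat. UNIV::nat set)" and h="\<lambda>(i,j). F i j" and s'=S]) auto
  have "((\<lambda>k. \<Sum>i\<le>k. F i (k-i)) has_sum S) UNIV"
    by (rule has_sum_SigmaD[OF h3]) auto
  then show ?thesis by (rule has_sum_imp_sums)
qed



definition FF :: "real \<Rightarrow> real \<Rightarrow> nat \<Rightarrow> nat \<Rightarrow> nat \<Rightarrow> real" where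
  "FF r s m i j = s^i / fact i * (pochhammer (real i + r) j / fact j * (1/2)^j) * (1/2)^i * (real (i+j))^m"

lemma FF_nonneg: "r > 0 \<Longrightarrow> s \<ge> 0 \<Longrightarrow> FF r s m i j \<ge> 0"
  unfolding FF_def by (intro mult_nonneg_nonneg divide_nonneg_pos pochhammer_nonneg) auto

lemma half_pow_powr: "(1/2::real)^i * 2 powr (real i + r) = 2 powr r"
  by (simp add: powr_add powr_realpow power_divide)

lemma sums_eqI: "f sums a \<Longrightarrow> (\<And>n. f n = g n) \<Longrightarrow> a = b \<Longrightarrow> g sums (b::real)"
  by (metis sums_cong)

context fixes r s :: real assumes r: "r > 0"
begin

lemma inner0: "FF r s 0 i sums (s^i / fact i * 2 powr r)"
proof -
  have "(\<lambda>j. s^i / fact i * (1/2)^i * (pochhammer (real i + r) j / fact j * (1/2)^j))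
     sums (s^i / fact i * (1/2)^i * 2 powr (real i + r))"
    using r by (intro sums_mult nb0) simp
  then show ?thesis
    by (rule sums_eqI) (simp_all add: FF_def half_pow_powr)
qed

lemma inner1: "FF r s 1 i sums (s^i / fact i * 2 powr r * (2 * real i + r))"
proof -
  let ?P = "\<lambda>j. pochhammer (real i + r) j / fact j * (1/2)^j"
  have "(\<lambda>j. s^i / fact i * (1/2)^i * (real j * ?P j + real i * ?P j))
     sums (s^i / fact i * (1/2)^i * ((real i + r) * 2 powr (real i + r) + real i * 2 powr (real i + r)))"
    using r by (intro sums_mult sums_add nb0 nb1) simp_all
  then show ?thesis
  proof (rule sums_eqI)
    show "s^i / fact i * (1/2)^i * ((real i + r) * 2 powr (real i + r) + real i * 2 powr (real i + r))
     = s^i / fact i * 2 powr r * (2 * real i + r)"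
      using half_pow_powr[of i r] by (simp add: algebra_simps add_divide_distrib)
    show "s^i / fact i * (1/2)^i * (real j * ?P j + real i * ?P j) = FF r s 1 i j" for j
      by (simp add: FF_def algebra_simps add_divide_distrib)
  qed
qed

lemma inner2: "FF r s 2 i sums (s^i / fact i * 2 powr r *
     (4 * (real i)^2 + (4*r+2) * real i + r^2 + 2*r))"
proof -
  let ?P = "\<lambda>j. pochhammer (real i + r) j / fact j * (1/2)^j"
  let ?b = "real i + r"
  have "(\<lambda>j. s^i / fact i * (1/2)^i * ((real j)^2 * ?P j + 2 * real i * (real j * ?P j) + (real i)^2 * ?P j))
     sums (s^i / fact i * (1/2)^i * (?b * (?b+2) * 2 powr ?b + 2 * real i * (?b * 2 powr ?b) + (real i)^2 * 2 powr ?b))"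
    using r by (intro sums_mult sums_add nb0 nb1 nb2) simp_all
  then show ?thesis
  proof (rule sums_eqI)
  show "s^i / fact i * (1/2)^i * (?b * (?b+2) * 2 powr ?b + 2 * real i * (?b * 2 powr ?b) + (real i)^2 * 2 powr ?b)
     = s^i / fact i * 2 powr r * (4 * (real i)^2 + (4*r+2) * real i + r^2 + 2*r)"
  proof -
    have "s^i / fact i * (1/2)^i * (?b * (?b+2) * 2 powr ?b + 2 * real i * (?b * 2 powr ?b) + (real i)^2 * 2 powr ?b)
       = s^i / fact i * ((1/2)^i * 2 powr ?b) * (?b * (?b+2) + 2 * real i * ?b + (real i)^2)"
      by (simp add: algebra_simps add_divide_distrib)
    also have "\<dots> = s^i / fact i * 2 powr r * (4 * (real i)^2 + (4*r+2) * real i + r^2 + 2*r)"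
      by (simp only: half_pow_powr) (simp add: algebra_simps power2_eq_square)
    finally show ?thesis .
  qed
  show "s^i / fact i * (1/2)^i * ((real j)^2 * ?P j + 2 * real i * (real j * ?P j) + (real i)^2 * ?P j) = FF r s 2 i j" for j
    by (simp add: FF_def algebra_simps power2_eq_square add_divide_distrib)
  qed
qed

lemma outer0: "(\<lambda>i. s^i / fact i * 2 powr r) sums (2 powr r * exp s)"
  using sums_mult2[OF po0[of s], of "2 powr r"] by (simp add: mult_ac)

lemma outer1: "(\<lambda>i. s^i / fact i * 2 powr r * (2 * real i + r)) sums (2 powr r * exp s * (2 * s + r))"
proof -
  have "(\<lambda>i. 2 powr r * (2 * (real i * (s^i / fact i)) + r * (s^i / fact i))) sums (2 powr r * (2 * (s * exp s) + r * exp s))"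
    by (intro sums_mult sums_add po0 po1)
  then show ?thesis by (rule sums_eqI) (simp_all add: algebra_simps add_divide_distrib)
qed

lemma outer2: "(\<lambda>i. s^i / fact i * 2 powr r * (4 * (real i)^2 + (4*r+2) * real i + r^2 + 2*r))
   sums (2 powr r * exp s * (4 * s^2 + (4*r+6) * s + r^2 + 2*r))"
proof -
  have "(\<lambda>i. 2 powr r * (4 * ((real i)^2 * (s^i / fact i)) + (4*r+2) * (real i * (s^i / fact i)) + (r^2 + 2*r) * (s^i / fact i)))
     sums (2 powr r * (4 * ((s^2 + s) * exp s) + (4*r+2) * (s * exp s) + (r^2 + 2*r) * exp s))"
    by (intro sums_mult sums_add po0 po1 po2)
  then show ?thesis
  proof (rule sums_eqI)
    show "2 powr r * (4 * ((s^2 + s) * exp s) + (4*r+2) * (s * exp s) + (r^2 + 2*r) * exp s)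
     = 2 powr r * exp s * (4 * s^2 + (4*r+6) * s + r^2 + 2*r)" by (simp add: algebra_simps)
    show "2 powr r * (4 * ((real i)^2 * (s^i / fact i)) + (4*r+2) * (real i * (s^i / fact i)) + (r^2 + 2*r) * (s^i / fact i))
      = s^i / fact i * 2 powr r * (4 * (real i)^2 + (4*r+2) * real i + r^2 + 2*r)" for i
      by (simp add: algebra_simps)
  qed
qed

end



lemma powr_neg_half: "2 powr (- real k) = (1/2::real)^k"
  by (simp add: powr_minus powr_realpow power_one_over inverse_eq_divide)

lemma lag_term:
  assumes "i \<le> k"
  shows "2 powr (- real k) * ((-1)^i / fact i * ((real k + \<alpha>) gchoose (k - i)) * (-s)^i)
       = FF (\<alpha>+1) s 0 i (k-i)"
proof -
  have e: "real k + \<alpha> - real (k-i) + 1 = real i + (\<alpha>+1)"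
    using assms by (simp add: of_nat_diff)
  have g: "(real k + \<alpha>) gchoose (k - i) = pochhammer (real i + (\<alpha>+1)) (k-i) / fact (k-i)"
    by (subst gbinomial_pochhammer') (simp only: e)
  have p: "(-1::real)^i * (-s)^i = s^i" by (simp add: power_mult_distrib[symmetric])
  have h: "(1/2::real)^k = (1/2)^(k-i) * (1/2)^i"
    using assms by (simp add: power_add[symmetric])
  show ?thesis
    unfolding FF_def powr_neg_half g h
    by (simp add: p[symmetric] mult_ac)
qed

context fixes \<alpha> \<eta> x :: real assumes al: "\<alpha> > -1" and et: "\<eta> > 0" and xx: "x \<ge> 0"
begin

lemma pb_eq: "pbasis \<alpha> \<eta> k x = exp (-(\<eta>*x/2)) * 2 powr (-(\<alpha>+1)) * (\<Sum>i\<le>k. FF (\<alpha>+1) (\<eta>*x/2) 0 i (k-i))"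
proof -
  have "2 powr (- real k) * laguerre k \<alpha> (-(\<eta>*x/2)) = (\<Sum>i\<le>k. FF (\<alpha>+1) (\<eta>*x/2) 0 i (k-i))"
    unfolding laguerre_def sum_distrib_left atLeast0AtMost
    by (intro sum.cong refl lag_term) simp
  then show ?thesis unfolding pbasis_def by (simp add: mult_ac)
qed

lemma pb_nonneg: "pbasis \<alpha> \<eta> k x \<ge> 0"
  unfolding pb_eq using al et xx by (intro mult_nonneg_nonneg sum_nonneg FF_nonneg) auto

lemma diag_m: "(\<Sum>i\<le>k. FF r s m i (k-i)) = (real k)^m * (\<Sum>i\<le>k. FF r s 0 i (k-i))"
  unfolding sum_distrib_left by (intro sum.cong refl) (simp add: FF_def)

lemma pb_mom_gen:
  assumes "(\<lambda>k. \<Sum>i\<le>k. FF (\<alpha>+1) (\<eta>*x/2) m i (k-i)) sums (2 powr (\<alpha>+1) * exp (\<eta>*x/2) * P)"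
  shows "(\<lambda>k. pbasis \<alpha> \<eta> k x * (real k)^m) sums P"
proof -
  have "(\<lambda>k. exp (-(\<eta>*x/2)) * 2 powr (-(\<alpha>+1)) * (\<Sum>i\<le>k. FF (\<alpha>+1) (\<eta>*x/2) m i (k-i)))
     sums (exp (-(\<eta>*x/2)) * 2 powr (-(\<alpha>+1)) * (2 powr (\<alpha>+1) * exp (\<eta>*x/2) * P))"
    by (intro sums_mult assms)
  then show ?thesis
  proof (rule sums_eqI)
    show "exp (-(\<eta>*x/2)) * 2 powr (-(\<alpha>+1)) * (2 powr (\<alpha>+1) * exp (\<eta>*x/2) * P) = P"
    proof -
      have 1: "2 powr (-(\<alpha>+1)) * 2 powr (\<alpha>+1) = (1::real)" by (subst powr_add[symmetric]) simp
      have 2: "exp (-(\<eta>*x/2)) * exp (\<eta>*x/2) = 1" by (subst exp_add[symmetric]) simp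
      have "exp (-(\<eta>*x/2)) * 2 powr (-(\<alpha>+1)) * (2 powr (\<alpha>+1) * exp (\<eta>*x/2) * P)
         = (exp (-(\<eta>*x/2)) * exp (\<eta>*x/2)) * (2 powr (-(\<alpha>+1)) * 2 powr (\<alpha>+1)) * P"
        by (simp only: mult_ac)
      then show ?thesis by (simp only: 1 2 mult_1_left)
    qed
    show "exp (-(\<eta>*x/2)) * 2 powr (-(\<alpha>+1)) * (\<Sum>i\<le>k. FF (\<alpha>+1) (\<eta>*x/2) m i (k-i)) =
         pbasis \<alpha> \<eta> k x * (real k)^m" for k
      unfolding pb_eq by (subst diag_m) simp
  qed
qed

lemma FFnn: "FF (\<alpha>+1) (\<eta>*x/2) m i j \<ge> 0"
  using al et xx by (intro FF_nonneg) auto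

lemma pb_sum0: "(\<lambda>k. pbasis \<alpha> \<eta> k x) sums 1"
proof -
  have "(\<lambda>k. pbasis \<alpha> \<eta> k x * (real k)^0) sums 1"
  proof (rule pb_mom_gen)
    show "(\<lambda>k. \<Sum>i\<le>k. FF (\<alpha>+1) (\<eta>*x/2) 0 i (k-i)) sums (2 powr (\<alpha>+1) * exp (\<eta>*x/2) * 1)"
      using diag_sums[OF FFnn inner0 outer0] al by simp
  qed
  then show ?thesis by simp
qed

lemma pb_sum1: "(\<lambda>k. pbasis \<alpha> \<eta> k x * real k) sums (\<eta>*x + (\<alpha>+1))"
proof -
  have "(\<lambda>k. pbasis \<alpha> \<eta> k x * (real k)^1) sums (\<eta>*x + (\<alpha>+1))"
  proof (rule pb_mom_gen)
    show "(\<lambda>k. \<Sum>i\<le>k. FF (\<alpha>+1) (\<eta>*x/2) 1 i (k-i)) sums (2 powr (\<alpha>+1) * exp (\<eta>*x/2) * (\<eta>*x + (\<alpha>+1)))"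
      using diag_sums[OF FFnn inner1 outer1] al by simp
  qed
  then show ?thesis by simp
qed

lemma pb_sum2: "(\<lambda>k. pbasis \<alpha> \<eta> k x * (real k)^2) sums
   ((\<eta>*x)^2 + (2*(\<alpha>+1)+3) * (\<eta>*x) + (\<alpha>+1)^2 + 2*(\<alpha>+1))"
proof (rule pb_mom_gen)
  have e: "4 * (\<eta>*x/2)^2 + (4*(\<alpha>+1)+6) * (\<eta>*x/2) + (\<alpha>+1)^2 + 2*(\<alpha>+1)
     = (\<eta>*x)^2 + (2*(\<alpha>+1)+3) * (\<eta>*x) + (\<alpha>+1)^2 + 2*(\<alpha>+1)"
    by (simp add: power2_eq_square algebra_simps)
  show "(\<lambda>k. \<Sum>i\<le>k. FF (\<alpha>+1) (\<eta>*x/2) 2 i (k-i)) sums (2 powr (\<alpha>+1) * exp (\<eta>*x/2) *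
      ((\<eta>*x)^2 + (2*(\<alpha>+1)+3) * (\<eta>*x) + (\<alpha>+1)^2 + 2*(\<alpha>+1)))"
    using diag_sums[OF FFnn inner2 outer2] al by (simp only: e)
qed

end



lemma gamma_hb:
  fixes a :: real assumes a: "a > 0"
  shows "has_bochner_integral lborel (\<lambda>t. indicator {0<..} t * (t powr (a-1) * exp (-t))) (Gamma a)"
proof -
  have hi: "((\<lambda>t. t powr (a-1) / exp t) has_integral Gamma a) {0..}"
    using Gamma_integral_real[OF a] .
  have nn: "integral\<^sup>N lborel (\<lambda>t. ennreal (t powr (a-1) / exp t) * indicator {0..} t) = ennreal (Gamma a)"
    by (rule nn_integral_has_integral_lebesgue'[OF _ hi]) simp
  have eq: "ennreal (t powr (a-1) / exp t) * indicator {0..} t = ennreal (indicator {0<..} t * (t powr (a-1) * exp (-t)))" for t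
    by (cases "t > 0"; cases "t = 0") (auto simp: indicator_def exp_minus field_simps)
  have nn2: "integral\<^sup>N lborel (\<lambda>t. ennreal (indicator {0<..} t * (t powr (a-1) * exp (-t)))) = ennreal (Gamma a)"
    using nn by (simp only: eq)
  have meas: "(\<lambda>t. indicator {0<..} t * (t powr (a-1) * exp (-t))) \<in> borel_measurable lborel"
    by measurable
  have pos: "AE t in lborel. 0 \<le> indicator {0<..} t * (t powr (a-1) * exp (-t))"
    by (auto simp: indicator_def)
  have int: "integrable lborel (\<lambda>t. indicator {0<..} t * (t powr (a-1) * exp (-t)))"
    by (rule integrableI_nn_integral_finite[OF meas pos nn2])
  have "integral\<^sup>L lborel (\<lambda>t. indicator {0<..} t * (t powr (a-1) * exp (-t))) = Gamma a"
    using integral_eq_nn_integral[OF meas pos] nn2 Gamma_real_pos[OF a] by simp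
  with int show ?thesis by (simp add: has_bochner_integral_iff)
qed

lemma ker_mom:
  fixes \<beta> \<eta> :: real and k m :: nat
  assumes b: "\<beta> > 0" and e: "\<eta> > 0" and k: "k > 0"
  shows "has_bochner_integral lborel (\<lambda>z. indicator {0<..} z * (Ikernel \<beta> k \<eta> z * z^m))
           (Gamma (real k * \<beta> + real m) / ((\<eta>*\<beta>)^m * Gamma (real k * \<beta>)))"
proof -
  define a where "a = real k * \<beta>"
  define c where "c = \<eta> * \<beta>"
  have a: "a > 0" using b k by (simp add: a_def)
  have c: "c > 0" using b e by (simp add: c_def)
  have "has_bochner_integral lborel (\<lambda>t. indicator {0<..} t * (t powr (a + real m - 1) * exp (-t))) (Gamma (a + real m))"
    using gamma_hb[of "a + real m"] a by simp
  then have "has_bochner_integral lborel (\<lambda>z. indicator {0<..} (0 + c*z) * ((0 + c*z) powr (a + real m - 1) * exp (-(0 + c*z))))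
     (Gamma (a + real m) /\<^sub>R \<bar>c\<bar>)"
    using lborel_has_bochner_integral_real_affine_iff[where c=c and t=0, THEN iffD1] c by blast
  then have X: "has_bochner_integral lborel (\<lambda>z. c / (c^m * Gamma a) * (indicator {0<..} (0 + c*z) * ((0 + c*z) powr (a + real m - 1) * exp (-(0 + c*z)))))
     (c / (c^m * Gamma a) * (Gamma (a + real m) /\<^sub>R \<bar>c\<bar>))"
    by (rule has_bochner_integral_mult_right)
  have eqv: "c / (c^m * Gamma a) * (Gamma (a + real m) /\<^sub>R \<bar>c\<bar>) = Gamma (real k * \<beta> + real m) / ((\<eta>*\<beta>)^m * Gamma (real k * \<beta>))"
    using c b e Gamma_real_pos[OF a] by (simp add: a_def c_def field_simps)
  have eqf: "(\<lambda>z. c / (c^m * Gamma a) * (indicator {0<..} (0 + c*z) * ((0 + c*z) powr (a + real m - 1) * exp (-(0 + c*z)))))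
       = (\<lambda>z. indicator {0<..} z * (Ikernel \<beta> k \<eta> z * z^m))"
  proof (rule ext)
    fix z :: real
    show "c / (c^m * Gamma a) * (indicator {0<..} (0 + c*z) * ((0 + c*z) powr (a + real m - 1) * exp (-(0 + c*z))))
       = indicator {0<..} z * (Ikernel \<beta> k \<eta> z * z^m)"
    proof (cases "z > 0")
      case True
      have cz: "c * z > 0" using c True by simp
      have "(c*z) powr (a + real m - 1) = (c*z) powr (a - 1) * (c^m * z^m)"
      proof -
        have "(c*z) powr (a + real m - 1) = (c*z) powr ((a - 1) + real m)" by (simp add: algebra_simps)
        also have "\<dots> = (c*z) powr (a - 1) * (c*z) powr (real m)" by (rule powr_add)
        also have "(c*z) powr (real m) = (c*z)^m" using cz by (rule powr_realpow)
        finally show ?thesis by (simp add: power_mult_distrib)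
      qed
      then show ?thesis using True c cz Gamma_real_pos[OF a]
        by (simp add: Ikernel_def a_def c_def indicator_def field_simps)
    next
      case False
      then have "\<not> c * z > 0" using c by (simp add: zero_less_mult_iff)
      then show ?thesis using False by (simp add: indicator_def)
    qed
  qed
  show ?thesis using X unfolding eqf eqv .
qed



definition TT :: "real \<Rightarrow> real \<Rightarrow> nat \<Rightarrow> (real \<Rightarrow> real) \<Rightarrow> real" where
  "TT \<beta> \<eta> k g = (if k = 0 then g 0 else LINT z:{0<..}|lborel. Ikernel \<beta> k \<eta> z * g z)"

definition adm :: "(real \<Rightarrow> real) \<Rightarrow> bool" where
  "adm g \<longleftrightarrow> continuous_on {0..} g \<and> (\<exists>M. \<forall>t\<ge>0. \<bar>g t\<bar> \<le> M * zeta t)"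

lemma Gp1: "(x::real) > 0 \<Longrightarrow> Gamma (x+1) = x * Gamma x"
  by (rule Gamma_plus1) (auto dest: nonpos_Ints_nonpos)

context fixes \<beta> \<eta> :: real assumes b: "\<beta> > 0" and e: "\<eta> > 0"
begin

lemma km0: "k > 0 \<Longrightarrow> has_bochner_integral lborel (\<lambda>z. indicator {0<..} z * Ikernel \<beta> k \<eta> z) 1"
proof -
  assume k: "k > 0"
  then have "Gamma (real k * \<beta>) > 0" using b by simp
  then show ?thesis using ker_mom[OF b e k, of 0] by simp
qed

lemma km1: "k > 0 \<Longrightarrow> has_bochner_integral lborel (\<lambda>z. indicator {0<..} z * (Ikernel \<beta> k \<eta> z * z)) (real k / \<eta>)"
proof -
  assume k: "k > 0"
  then have kb: "real k * \<beta> > 0" using b by simp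
  have "Gamma (real k * \<beta> + real 1) / ((\<eta>*\<beta>)^1 * Gamma (real k * \<beta>)) = real k / \<eta>"
    using Gp1[OF kb] Gamma_real_pos[OF kb] b e by (simp add: field_simps)
  then show ?thesis using ker_mom[OF b e k, of 1] by simp
qed

lemma km2: "k > 0 \<Longrightarrow> has_bochner_integral lborel (\<lambda>z. indicator {0<..} z * (Ikernel \<beta> k \<eta> z * z^2))
    (((real k)^2 + real k / \<beta>) / \<eta>^2)"
proof -
  assume k: "k > 0"
  have g: "Gamma (real k * \<beta> + real 2) = (real k * \<beta> + 1) * (real k * \<beta>) * Gamma (real k * \<beta>)"
  proof -
    have "Gamma (real k * \<beta> + real 2) = Gamma ((real k * \<beta> + 1) + 1)" by (simp add: algebra_simps)
    also have "\<dots> = (real k * \<beta> + 1) * Gamma (real k * \<beta> + 1)"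
      by (rule Gp1) (use k b in \<open>simp add: add_pos_pos\<close>)
    also have "Gamma (real k * \<beta> + 1) = real k * \<beta> * Gamma (real k * \<beta>)" by (rule Gp1) (use k b in simp)
    finally show ?thesis by simp
  qed
  have "Gamma (real k * \<beta> + real 2) / ((\<eta>*\<beta>)^2 * Gamma (real k * \<beta>)) = ((real k)^2 + real k / \<beta>) / \<eta>^2"
  proof -
    have "real k * \<beta> > 0" using k b by simp
    then have G: "Gamma (real k * \<beta>) \<noteq> 0" using Gamma_real_pos[of "real k * \<beta>"] by linarith
    have "(real k * \<beta> + 1) * (real k * \<beta>) * Gamma (real k * \<beta>) / ((\<eta>*\<beta>)^2 * Gamma (real k * \<beta>))
        = (real k * \<beta> + 1) * (real k * \<beta>) / (\<eta>*\<beta>)^2" using G by simp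
    also have "\<dots> = ((real k)^2 + real k / \<beta>) / \<eta>^2" using b e by (simp add: field_simps power2_eq_square)
    finally show ?thesis unfolding g .
  qed
  then show ?thesis using ker_mom[OF b e k, of 2] by simp
qed

lemma Ik_nonneg: "z > 0 \<Longrightarrow> Ikernel \<beta> k \<eta> z \<ge> 0"
  unfolding Ikernel_def using b e
  by (cases "k = 0") (auto intro!: divide_nonneg_nonneg mult_nonneg_nonneg Gamma_real_nonneg)

lemma Ik_cont: "k > 0 \<Longrightarrow> continuous_on {0<..} (Ikernel \<beta> k \<eta>)"
proof -
  assume "k > 0"
  then have "Gamma (real k * \<beta>) > 0" using b by simp
  then show ?thesis unfolding Ikernel_def using b e
    by (intro continuous_intros) auto
qed

end



context fixes \<beta> \<eta> :: real assumes b: "\<beta> > 0" and e: "\<eta> > 0"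
begin

lemma meas_ind:
  assumes "k > 0" "continuous_on {0..} g"
  shows "(\<lambda>z. indicator {0<..} z * (Ikernel \<beta> k \<eta> z * g z)) \<in> borel_measurable lborel"
proof -
  have "continuous_on {0<..} (\<lambda>z. Ikernel \<beta> k \<eta> z * g z)"
    by (intro continuous_intros Ik_cont[OF b e assms(1)] continuous_on_subset[OF assms(2)]) auto
  then have "(\<lambda>z. indicator {0<..} z *\<^sub>R (Ikernel \<beta> k \<eta> z * g z)) \<in> borel_measurable borel"
    by (intro borel_measurable_continuous_on_indicator) auto
  then show ?thesis by simp
qed

lemma integ:
  assumes k: "k > 0" and g: "adm g"
  shows "integrable lborel (\<lambda>z. indicator {0<..} z * (Ikernel \<beta> k \<eta> z * g z))"
proof -
  obtain M where M: "\<And>t. t \<ge> 0 \<Longrightarrow> \<bar>g t\<bar> \<le> M * zeta t" and c: "continuous_on {0..} g"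
    using g unfolding adm_def by blast
  have "has_bochner_integral lborel (\<lambda>z. M * (indicator {0<..} z * Ikernel \<beta> k \<eta> z) + M * (indicator {0<..} z * (Ikernel \<beta> k \<eta> z * z^2)))
     (M * 1 + M * (((real k)^2 + real k / \<beta>) / \<eta>^2))"
    using km0[OF b e k] km2[OF b e k] by (intro has_bochner_integral_add has_bochner_integral_mult_right)
  then have I: "integrable lborel (\<lambda>z. M * (indicator {0<..} z * Ikernel \<beta> k \<eta> z) + M * (indicator {0<..} z * (Ikernel \<beta> k \<eta> z * z^2)))"
    by (rule integrable.intros)
  show ?thesis
  proof (rule Bochner_Integration.integrable_bound[OF I meas_ind[OF k c]], rule AE_I2)
    fix z :: real
    show "norm (indicator {0<..} z * (Ikernel \<beta> k \<eta> z * g z))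
       \<le> norm (M * (indicator {0<..} z * Ikernel \<beta> k \<eta> z) + M * (indicator {0<..} z * (Ikernel \<beta> k \<eta> z * z^2)))"
    proof (cases "z > 0")
      case True
      have I0: "Ikernel \<beta> k \<eta> z \<ge> 0" using Ik_nonneg[OF b e True] .
      have "\<bar>Ikernel \<beta> k \<eta> z * g z\<bar> = Ikernel \<beta> k \<eta> z * \<bar>g z\<bar>" using I0 by (simp add: abs_mult)
      also have "\<dots> \<le> Ikernel \<beta> k \<eta> z * (M * zeta z)" using M[of z] True I0 by (intro mult_left_mono) auto
      also have "\<dots> = M * Ikernel \<beta> k \<eta> z + M * (Ikernel \<beta> k \<eta> z * z^2)" by (simp add: zeta_def algebra_simps)
      also have "\<dots> \<le> \<bar>M * Ikernel \<beta> k \<eta> z + M * (Ikernel \<beta> k \<eta> z * z^2)\<bar>" by simp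
      finally show ?thesis using True by (simp add: indicator_def)
    qed (simp add: indicator_def)
  qed
qed

lemma TT_eq: "k > 0 \<Longrightarrow> TT \<beta> \<eta> k g = integral\<^sup>L lborel (\<lambda>z. indicator {0<..} z * (Ikernel \<beta> k \<eta> z * g z))"
  by (simp add: TT_def set_lebesgue_integral_def)

lemma zeta_ge: "t \<ge> 0 \<Longrightarrow> 1 \<le> zeta t \<and> t \<le> zeta t \<and> t^2 \<le> zeta t"
proof -
  assume t: "t \<ge> 0"
  have "0 \<le> (t - 1/2)^2" by simp
  then have "t \<le> 1 + t^2" by (simp add: power2_eq_square algebra_simps)
  then show ?thesis by (simp add: zeta_def)
qed

lemma adm_combo:
  assumes "adm \<Phi>"
  shows "adm (\<lambda>t. u * \<Phi> t + c0 + c1 * t + c2 * t^2)"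
proof -
  obtain M where M: "\<And>t. t \<ge> 0 \<Longrightarrow> \<bar>\<Phi> t\<bar> \<le> M * zeta t" and c: "continuous_on {0..} \<Phi>"
    using assms unfolding adm_def by blast
  have "\<bar>u * \<Phi> t + c0 + c1 * t + c2 * t^2\<bar> \<le> (\<bar>u\<bar> * M + \<bar>c0\<bar> + \<bar>c1\<bar> + \<bar>c2\<bar>) * zeta t" if t: "t \<ge> 0" for t
  proof -
    have z: "1 \<le> zeta t" "t \<le> zeta t" "t^2 \<le> zeta t" using zeta_ge[OF t] by auto
    have a1: "\<bar>u * \<Phi> t\<bar> \<le> \<bar>u\<bar> * (M * zeta t)" unfolding abs_mult by (intro mult_left_mono M t) simp
    have a2: "\<bar>c0\<bar> \<le> \<bar>c0\<bar> * zeta t" using z(1) by (simp add: mult_le_cancel_left1)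
    have a3: "\<bar>c1 * t\<bar> \<le> \<bar>c1\<bar> * zeta t" unfolding abs_mult using z(2) t by (intro mult_left_mono) auto
    have a4: "\<bar>c2 * t^2\<bar> \<le> \<bar>c2\<bar> * zeta t" unfolding abs_mult using z(3) t by (intro mult_left_mono) auto
    have "\<bar>u * \<Phi> t + c0 + c1 * t + c2 * t^2\<bar> \<le> \<bar>u * \<Phi> t\<bar> + \<bar>c0\<bar> + \<bar>c1 * t\<bar> + \<bar>c2 * t^2\<bar>"
      by linarith
    also have "\<dots> \<le> \<bar>u\<bar> * (M * zeta t) + \<bar>c0\<bar> * zeta t + \<bar>c1\<bar> * zeta t + \<bar>c2\<bar> * zeta t"
      using a1 a2 a3 a4 by linarith
    finally show ?thesis by (simp add: algebra_simps)
  qed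
  moreover have "continuous_on {0..} (\<lambda>t. u * \<Phi> t + c0 + c1 * t + c2 * t^2)"
    by (intro continuous_intros c)
  ultimately show ?thesis unfolding adm_def by blast
qed

end



context fixes \<beta> \<eta> :: real assumes b: "\<beta> > 0" and e: "\<eta> > 0"
begin

lemma TT_combo:
  assumes \<Phi>: "adm \<Phi>"
  shows "TT \<beta> \<eta> k (\<lambda>t. u * \<Phi> t + c0 + c1 * t + c2 * t^2)
       = u * TT \<beta> \<eta> k \<Phi> + c0 + c1 * (real k / \<eta>) + c2 * (((real k)^2 + real k / \<beta>) / \<eta>^2)"
proof (cases "k = 0")
  case True then show ?thesis by (simp add: TT_def)
next
  case False
  then have k: "k > 0" by simp
  have hP: "has_bochner_integral lborel (\<lambda>z. indicator {0<..} z * (Ikernel \<beta> k \<eta> z * \<Phi> z)) (TT \<beta> \<eta> k \<Phi>)"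
    unfolding TT_eq[OF b e k] by (rule has_bochner_integral_integrable[OF integ[OF b e k \<Phi>]])
  have "has_bochner_integral lborel
     (\<lambda>z. u * (indicator {0<..} z * (Ikernel \<beta> k \<eta> z * \<Phi> z)) + c0 * (indicator {0<..} z * Ikernel \<beta> k \<eta> z)
        + c1 * (indicator {0<..} z * (Ikernel \<beta> k \<eta> z * z)) + c2 * (indicator {0<..} z * (Ikernel \<beta> k \<eta> z * z^2)))
     (u * TT \<beta> \<eta> k \<Phi> + c0 * 1 + c1 * (real k / \<eta>) + c2 * (((real k)^2 + real k / \<beta>) / \<eta>^2))"
    using hP km0[OF b e k] km1[OF b e k] km2[OF b e k]
    by (intro has_bochner_integral_add has_bochner_integral_mult_right)
  moreover have "(\<lambda>z. u * (indicator {0<..} z * (Ikernel \<beta> k \<eta> z * \<Phi> z)) + c0 * (indicator {0<..} z * Ikernel \<beta> k \<eta> z)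
        + c1 * (indicator {0<..} z * (Ikernel \<beta> k \<eta> z * z)) + c2 * (indicator {0<..} z * (Ikernel \<beta> k \<eta> z * z^2)))
      = (\<lambda>z. indicator {0<..} z * (Ikernel \<beta> k \<eta> z * (u * \<Phi> z + c0 + c1 * z + c2 * z^2)))"
    by (rule ext) (simp add: algebra_simps)
  ultimately have "has_bochner_integral lborel (\<lambda>z. indicator {0<..} z * (Ikernel \<beta> k \<eta> z * (u * \<Phi> z + c0 + c1 * z + c2 * z^2)))
     (u * TT \<beta> \<eta> k \<Phi> + c0 * 1 + c1 * (real k / \<eta>) + c2 * (((real k)^2 + real k / \<beta>) / \<eta>^2))"
    by simp
  then show ?thesis unfolding TT_eq[OF b e k] by (simp add: has_bochner_integral_integral_eq)
qed

lemma TT_mono: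
  assumes g: "adm g" and h: "adm h" and le: "\<And>t. t \<ge> 0 \<Longrightarrow> g t \<le> h t"
  shows "TT \<beta> \<eta> k g \<le> TT \<beta> \<eta> k h"
proof (cases "k = 0")
  case True then show ?thesis using le[of 0] by (simp add: TT_def)
next
  case False
  then have k: "k > 0" by simp
  show ?thesis unfolding TT_eq[OF b e k]
  proof (rule integral_mono[OF integ[OF b e k g] integ[OF b e k h]])
    fix z :: real
    show "indicator {0<..} z * (Ikernel \<beta> k \<eta> z * g z) \<le> indicator {0<..} z * (Ikernel \<beta> k \<eta> z * h z)"
      using Ik_nonneg[OF b e, of z k] le[of z]
      by (cases "z > 0") (auto simp: indicator_def intro: mult_left_mono)
  qed
qed

end



definition RR :: "real \<Rightarrow> real \<Rightarrow> real \<Rightarrow> real \<Rightarrow> (real \<Rightarrow> real) \<Rightarrow> real" where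
  "RR \<alpha> \<beta> \<eta> x g = (\<Sum>k. pbasis \<alpha> \<eta> k x * TT \<beta> \<eta> k g)"

context fixes \<alpha> \<beta> \<eta> x :: real
  assumes al: "\<alpha> > -1" and b: "\<beta> > 0" and e: "\<eta> > 0" and xx: "x \<ge> 0"
begin

abbreviation "pb k \<equiv> pbasis \<alpha> \<eta> k x"

lemma term_combo:
  assumes "adm \<Phi>"
  shows "pb k * TT \<beta> \<eta> k (\<lambda>t. u * \<Phi> t + c0 + c1 * t + c2 * t^2)
   = u * (pb k * TT \<beta> \<eta> k \<Phi>) + c0 * pb k + (c1 / \<eta> + c2 / (\<beta> * \<eta>^2)) * (pb k * real k)
     + c2 / \<eta>^2 * (pb k * (real k)^2)"
  unfolding TT_combo[OF b e assms] using b e by (simp add: field_simps)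

lemma TT_bound:
  assumes "adm \<Phi>"
  obtains M where "\<And>k. \<bar>TT \<beta> \<eta> k \<Phi>\<bar> \<le> M + M / (\<beta> * \<eta>^2) * real k + M / \<eta>^2 * (real k)^2"
proof -
  obtain M where M: "\<And>t. t \<ge> 0 \<Longrightarrow> \<bar>\<Phi> t\<bar> \<le> M * zeta t"
    using assms unfolding adm_def by blast
  have "\<bar>TT \<beta> \<eta> k \<Phi>\<bar> \<le> M + M / (\<beta> * \<eta>^2) * real k + M / \<eta>^2 * (real k)^2" for k
  proof -
    have a1: "adm (\<lambda>t. 0 * \<Phi> t + M + 0 * t + M * t^2)" "adm (\<lambda>t. 0 * \<Phi> t + (-M) + 0 * t + (-M) * t^2)"
      "adm (\<lambda>t. 1 * \<Phi> t + 0 + 0 * t + 0 * t^2)"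
      using adm_combo[OF b e assms] by blast+
    have up: "TT \<beta> \<eta> k (\<lambda>t. 1 * \<Phi> t + 0 + 0 * t + 0 * t^2) \<le> TT \<beta> \<eta> k (\<lambda>t. 0 * \<Phi> t + M + 0 * t + M * t^2)"
      by (rule TT_mono[OF b e a1(3) a1(1)]) (use M in \<open>force simp: zeta_def abs_le_iff algebra_simps\<close>)
    have lo: "TT \<beta> \<eta> k (\<lambda>t. 0 * \<Phi> t + (-M) + 0 * t + (-M) * t^2) \<le> TT \<beta> \<eta> k (\<lambda>t. 1 * \<Phi> t + 0 + 0 * t + 0 * t^2)"
      by (rule TT_mono[OF b e a1(2) a1(3)]) (use M in \<open>fastforce simp: zeta_def abs_le_iff algebra_simps\<close>)
    have v: "M * (((real k)^2 + real k / \<beta>) / \<eta>^2) = M / (\<beta> * \<eta>^2) * real k + M / \<eta>^2 * (real k)^2"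
      using b e by (simp add: field_simps)
    have v2: "(-M) * (((real k)^2 + real k / \<beta>) / \<eta>^2) = - (M / (\<beta> * \<eta>^2) * real k + M / \<eta>^2 * (real k)^2)"
      using b e by (simp add: field_simps)
    show ?thesis using up lo unfolding TT_combo[OF b e assms] v v2 by (simp add: abs_le_iff)
  qed
  then show ?thesis using that by blast
qed

lemma summ_mom: "summable (\<lambda>k. A * pb k + B * (pb k * real k) + C * (pb k * (real k)^2))"
  using pb_sum0[OF al e xx] pb_sum1[OF al e xx] pb_sum2[OF al e xx]
  by (intro summable_add summable_mult sums_summable) (auto intro: sums_summable)

lemma summ:
  assumes "adm \<Phi>"
  shows "summable (\<lambda>k. pb k * TT \<beta> \<eta> k \<Phi>)"
proof -
  obtain M where M: "\<And>k. \<bar>TT \<beta> \<eta> k \<Phi>\<bar> \<le> M + M / (\<beta> * \<eta>^2) * real k + M / \<eta>^2 * (real k)^2"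
    using TT_bound[OF assms] by blast
  show ?thesis
  proof (rule summable_comparison_test[OF _ summ_mom[of M "M / (\<beta> * \<eta>^2)" "M / \<eta>^2"]], intro exI allI impI)
    fix k :: nat
    have "norm (pb k * TT \<beta> \<eta> k \<Phi>) = pb k * \<bar>TT \<beta> \<eta> k \<Phi>\<bar>"
      using pb_nonneg[OF al e xx] by (simp add: abs_mult)
    also have "\<dots> \<le> pb k * (M + M / (\<beta> * \<eta>^2) * real k + M / \<eta>^2 * (real k)^2)"
      by (intro mult_left_mono M pb_nonneg[OF al e xx])
    finally show "norm (pb k * TT \<beta> \<eta> k \<Phi>) \<le> M * pb k + M / (\<beta> * \<eta>^2) * (pb k * real k) + M / \<eta>^2 * (pb k * (real k)^2)"
      by (simp add: algebra_simps)
  qed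
qed

lemma RR_combo:
  assumes "adm \<Phi>"
  shows "RR \<alpha> \<beta> \<eta> x (\<lambda>t. u * \<Phi> t + c0 + c1 * t + c2 * t^2)
   = u * RR \<alpha> \<beta> \<eta> x \<Phi> + c0 + (c1 / \<eta> + c2 / (\<beta> * \<eta>^2)) * (\<eta>*x + (\<alpha>+1))
     + c2 / \<eta>^2 * ((\<eta>*x)^2 + (2*(\<alpha>+1)+3) * (\<eta>*x) + (\<alpha>+1)^2 + 2*(\<alpha>+1))"
proof -
  have "(\<lambda>k. u * (pb k * TT \<beta> \<eta> k \<Phi>) + c0 * pb k + (c1 / \<eta> + c2 / (\<beta> * \<eta>^2)) * (pb k * real k)
     + c2 / \<eta>^2 * (pb k * (real k)^2)) sums
     (u * RR \<alpha> \<beta> \<eta> x \<Phi> + c0 * 1 + (c1 / \<eta> + c2 / (\<beta> * \<eta>^2)) * (\<eta>*x + (\<alpha>+1))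
     + c2 / \<eta>^2 * ((\<eta>*x)^2 + (2*(\<alpha>+1)+3) * (\<eta>*x) + (\<alpha>+1)^2 + 2*(\<alpha>+1)))"
    unfolding RR_def
    by (intro sums_add sums_mult summable_sums summ assms pb_sum0[OF al e xx] pb_sum1[OF al e xx] pb_sum2[OF al e xx])
  then show ?thesis unfolding RR_def[of _ _ _ _ "\<lambda>t. u * \<Phi> t + c0 + c1 * t + c2 * t^2"] term_combo[OF assms]
    by (simp add: sums_iff)
qed

lemma RR_mono:
  assumes g: "adm g" and h: "adm h" and le: "\<And>t. t \<ge> 0 \<Longrightarrow> g t \<le> h t"
  shows "RR \<alpha> \<beta> \<eta> x g \<le> RR \<alpha> \<beta> \<eta> x h"
  unfolding RR_def
  by (intro suminf_le summ g h mult_left_mono TT_mono[OF b e g h le] pb_nonneg[OF al e xx])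

lemma Rop_RR:
  assumes "adm \<Phi>"
  shows "Rop \<alpha> \<beta> \<eta> \<Phi> x = RR \<alpha> \<beta> \<eta> x \<Phi>"
proof -
  have "(\<Sum>k. pb (Suc k) * TT \<beta> \<eta> (Suc k) \<Phi>) = RR \<alpha> \<beta> \<eta> x \<Phi> - pb 0 * TT \<beta> \<eta> 0 \<Phi>"
    unfolding RR_def by (rule suminf_split_head[OF summ[OF assms]])
  then show ?thesis unfolding Rop_def by (simp add: TT_def)
qed

end



context fixes \<alpha> \<beta> \<eta> x :: real
  assumes al: "\<alpha> > -1" and b: "\<beta> > 0" and e: "\<eta> > 0" and xx: "x \<ge> 0"
begin

lemma kor_step:
  assumes \<Phi>: "adm \<Phi>" and B: "B \<ge> 0"
    and hyp: "\<And>t. t \<ge> 0 \<Longrightarrow> \<bar>\<Phi> t - \<Phi> x - c * (t - x)\<bar> \<le> A + B * (t - x)^2"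
  shows "\<bar>RR \<alpha> \<beta> \<eta> x \<Phi> - \<Phi> x\<bar> \<le> \<bar>c\<bar> * ((\<alpha>+1) / \<eta>) + A
           + B * ((3 + 1/\<beta>) * x / \<eta> + ((\<alpha>+1)^2 + 2*(\<alpha>+1) + (\<alpha>+1)/\<beta>) / \<eta>^2)"
proof -
  let ?V = "A + B * ((3 + 1/\<beta>) * x / \<eta> + ((\<alpha>+1)^2 + 2*(\<alpha>+1) + (\<alpha>+1)/\<beta>) / \<eta>^2)"
  let ?g = "\<lambda>t. 1 * \<Phi> t + (c * x - \<Phi> x) + (-c) * t + 0 * t^2"
  let ?hp = "\<lambda>t. 0 * \<Phi> t + (A + B * x^2) + (-2 * B * x) * t + B * t^2"
  let ?hm = "\<lambda>t. 0 * \<Phi> t + (-(A + B * x^2)) + (2 * B * x) * t + (-B) * t^2"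
  have ag: "adm ?g" and ap: "adm ?hp" and am: "adm ?hm" using adm_combo[OF b e \<Phi>] by blast+
  have Rg: "RR \<alpha> \<beta> \<eta> x ?g = RR \<alpha> \<beta> \<eta> x \<Phi> - \<Phi> x - c * ((\<alpha>+1) / \<eta>)"
    unfolding RR_combo[OF al b e xx \<Phi>] using e by (simp add: field_simps)
  have Rp: "RR \<alpha> \<beta> \<eta> x ?hp = ?V"
    unfolding RR_combo[OF al b e xx \<Phi>] using e b by (simp add: field_simps power2_eq_square)
  have Rm: "RR \<alpha> \<beta> \<eta> x ?hm = - ?V"
    unfolding RR_combo[OF al b e xx \<Phi>] using e b by (simp add: field_simps power2_eq_square)
  have up: "RR \<alpha> \<beta> \<eta> x ?g \<le> RR \<alpha> \<beta> \<eta> x ?hp"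
  proof (rule RR_mono[OF al b e xx ag ap])
    fix t :: real assume "t \<ge> 0"
    then have "\<Phi> t - \<Phi> x - c * (t - x) \<le> A + B * (t - x)^2" using hyp[of t] by (simp add: abs_le_iff)
    then show "?g t \<le> ?hp t" by (simp add: algebra_simps power2_eq_square)
  qed
  have lo: "RR \<alpha> \<beta> \<eta> x ?hm \<le> RR \<alpha> \<beta> \<eta> x ?g"
  proof (rule RR_mono[OF al b e xx am ag])
    fix t :: real assume "t \<ge> 0"
    then have "-(\<Phi> t - \<Phi> x - c * (t - x)) \<le> A + B * (t - x)^2" using hyp[of t] by (simp add: abs_le_iff)
    then show "?hm t \<le> ?g t" by (simp add: algebra_simps power2_eq_square)
  qed
  have q: "(\<alpha>+1) / \<eta> \<ge> 0" using al e by simp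
  have c1: "c * ((\<alpha>+1) / \<eta>) \<le> \<bar>c\<bar> * ((\<alpha>+1) / \<eta>)" by (rule mult_right_mono[OF abs_ge_self q])
  have c2: "-(c * ((\<alpha>+1) / \<eta>)) \<le> \<bar>c\<bar> * ((\<alpha>+1) / \<eta>)"
    using mult_right_mono[OF abs_ge_minus_self[of c] q] by simp
  show ?thesis unfolding abs_le_iff using up lo c1 c2 unfolding Rg Rp Rm by (smt (verit))
qed

end



lemma zeta_pos: "zeta t > 0" by (simp add: zeta_def add_pos_nonneg)

lemma zeta_ge2: "t \<ge> 0 \<Longrightarrow> 1 \<le> zeta t \<and> t \<le> zeta t \<and> t^2 \<le> zeta t"
proof -
  assume t: "t \<ge> 0"
  have "0 \<le> (t - 1/2)^2" by simp
  then have "t \<le> 1 + t^2" by (simp add: power2_eq_square algebra_simps)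
  then show ?thesis by (simp add: zeta_def)
qed

lemma zeta_shift: "zeta t \<le> 2 * zeta x + 2 * (t - x)^2"
proof -
  have "t^2 \<le> 2 * x^2 + 2 * (t-x)^2"
    using sum_squares_ge_zero[of "t - 2*x" 0] by (simp add: power2_eq_square algebra_simps)
  then show ?thesis by (simp add: zeta_def)
qed

lemma local_bound:
  fixes \<Phi> :: "real \<Rightarrow> real" and L \<epsilon> :: real
  assumes \<Phi>: "adm \<Phi>" and lim: "((\<lambda>x. \<Phi> x / zeta x) \<longlongrightarrow> L) at_top" and \<epsilon>: "0 < \<epsilon>" "\<epsilon> \<le> 1"
  shows "\<exists>B\<ge>0. \<forall>x\<ge>0. \<exists>c. \<bar>c\<bar> \<le> 2 * \<bar>L\<bar> * zeta x \<and>
            (\<forall>t\<ge>0. \<bar>\<Phi> t - \<Phi> x - c * (t - x)\<bar> \<le> 3 * \<epsilon> * zeta x + B * (t - x)^2)"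
proof -
  obtain M where M: "\<And>t. t \<ge> 0 \<Longrightarrow> \<bar>\<Phi> t\<bar> \<le> M * zeta t" and cont: "continuous_on {0..} \<Phi>"
    using \<Phi> unfolding adm_def by blast
  have M0: "M \<ge> 0" using M[of 0] by (simp add: zeta_def)
  have "\<forall>\<^sub>F t in at_top. dist (\<Phi> t / zeta t) L < \<epsilon>" using lim \<epsilon>(1) by (rule tendstoD)
  then obtain A0 where A0: "\<And>t. t \<ge> A0 \<Longrightarrow> \<bar>\<Phi> t / zeta t - L\<bar> < \<epsilon>"
    by (auto simp: eventually_at_top_linorder dist_real_def)
  define e where "e t = \<Phi> t - L * zeta t" for t
  have eb: "\<bar>e t\<bar> \<le> \<epsilon> * zeta t" if "t \<ge> A0" for t
  proof -
    have "\<bar>\<Phi> t / zeta t - L\<bar> < \<epsilon>" using A0 that .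
    moreover have "\<Phi> t / zeta t - L = e t / zeta t" using zeta_pos[of t] by (simp add: e_def field_simps)
    ultimately have "\<bar>e t\<bar> / zeta t < \<epsilon>" using zeta_pos[of t] by simp
    then show ?thesis using zeta_pos[of t] by (simp add: pos_divide_less_eq)
  qed
  define A where "A = max A0 1"
  have A1: "A \<ge> 1" and AA0: "A \<ge> A0" by (auto simp: A_def)
  have "uniformly_continuous_on {0..2*A+1} \<Phi>"
    by (rule compact_uniformly_continuous[OF continuous_on_subset[OF cont]]) auto
  then obtain \<delta> where \<delta>: "\<delta> > 0" and ucont: "\<And>s t. s \<in> {0..2*A+1} \<Longrightarrow> t \<in> {0..2*A+1} \<Longrightarrow> dist t s < \<delta> \<Longrightarrow> dist (\<Phi> t) (\<Phi> s) < \<epsilon>"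
    unfolding uniformly_continuous_on_def using \<epsilon>(1) by metis
  define d where "d = min \<delta> 1"
  have d: "d > 0" "d \<le> 1" "d \<le> \<delta>" using \<delta> by (auto simp: d_def)
  define B1 where "B1 = 3 * \<bar>L\<bar> + 2 * M + 2"
  define B2 where "B2 = M * (3 * (1 + 4 * A^2) / d^2 + 2)"
  define B where "B = max B1 B2"
  have B1: "B1 \<le> B" and B2: "B2 \<le> B" by (auto simp: B_def)
  have B0: "B \<ge> 0" using B1 M0 by (simp add: B1_def)
  have main: "\<exists>c. \<bar>c\<bar> \<le> 2 * \<bar>L\<bar> * zeta x \<and>
            (\<forall>t\<ge>0. \<bar>\<Phi> t - \<Phi> x - c * (t - x)\<bar> \<le> 3 * \<epsilon> * zeta x + B * (t - x)^2)" if x: "x \<ge> 0" for x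
  proof (cases "x \<ge> 2 * A")
    case True
    have xz: "x \<le> zeta x" using zeta_ge2[OF x] by simp
    have cb: "\<bar>2 * L * x\<bar> \<le> 2 * \<bar>L\<bar> * zeta x"
      using x xz by (simp add: abs_mult mult_left_mono)
    have ex: "\<bar>e x\<bar> \<le> \<epsilon> * zeta x" using eb True AA0 A1 by auto
    have "\<bar>\<Phi> t - \<Phi> x - 2 * L * x * (t - x)\<bar> \<le> 3 * \<epsilon> * zeta x + B * (t - x)^2" if t: "t \<ge> 0" for t
    proof -
      have id: "\<Phi> t - \<Phi> x - 2 * L * x * (t - x) = L * (t - x)^2 + e t - e x"
        by (simp add: e_def zeta_def power2_eq_square algebra_simps)
      have sq0: "(t - x)^2 \<ge> 0" by simp
      have Lb: "\<bar>L * (t - x)^2\<bar> = \<bar>L\<bar> * (t - x)^2" by (simp add: abs_mult)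
      show ?thesis
      proof (cases "t \<ge> A0")
        case True
        have "\<bar>e t\<bar> \<le> \<epsilon> * zeta t" using eb True by blast
        also have "\<dots> \<le> \<epsilon> * (2 * zeta x + 2 * (t - x)^2)" using \<epsilon> zeta_shift by (intro mult_left_mono) auto
        finally have et: "\<bar>e t\<bar> \<le> 2 * \<epsilon> * zeta x + 2 * \<epsilon> * (t - x)^2" by (simp add: algebra_simps)
        have "2 * \<epsilon> * (t - x)^2 \<le> 2 * (t - x)^2" using \<epsilon> sq0 by (simp add: mult_right_mono)
        moreover have "(\<bar>L\<bar> + 2) * (t - x)^2 \<le> B * (t - x)^2"
          using B1 sq0 M0 by (intro mult_right_mono) (auto simp: B1_def)
        ultimately show ?thesis unfolding id using et ex Lb
          by (simp add: algebra_simps)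
      next
        case False
        then have tA: "t < A" using AA0 by simp
        have "\<bar>e t\<bar> \<le> \<bar>\<Phi> t\<bar> + \<bar>L\<bar> * zeta t" 
        proof -
          have "\<bar>L * zeta t\<bar> = \<bar>L\<bar> * zeta t" using zeta_pos[of t] by (simp add: abs_mult)
          then show ?thesis unfolding e_def by linarith
        qed
        also have "\<dots> \<le> (M + \<bar>L\<bar>) * zeta t" using M[OF t] by (simp add: algebra_simps)
        finally have et1: "\<bar>e t\<bar> \<le> (M + \<bar>L\<bar>) * zeta t" .
        have "x - t \<ge> A" using True tA by simp
        then have "A^2 \<le> (x - t)^2" using A1 by (intro power_mono) auto
        then have "(t - x)^2 \<ge> A^2" by (simp add: power2_commute)
        moreover have "zeta t \<le> 1 + A^2" using t tA by (simp add: zeta_def power_mono)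
        moreover have "A^2 \<ge> 1" using A1 by (simp add: one_le_power)
        ultimately have zt: "zeta t \<le> 2 * (t - x)^2" by linarith
        have "(M + \<bar>L\<bar>) * zeta t \<le> (M + \<bar>L\<bar>) * (2 * (t - x)^2)" using zt M0 by (intro mult_left_mono) auto
        then have et: "\<bar>e t\<bar> \<le> 2 * M * (t - x)^2 + 2 * \<bar>L\<bar> * (t - x)^2" using et1 by (simp add: algebra_simps)
        have bb: "3 * \<bar>L\<bar> * (t - x)^2 + 2 * M * (t - x)^2 \<le> B * (t - x)^2"
          using B1 sq0 mult_right_mono[of "3 * \<bar>L\<bar> + 2 * M" B "(t - x)^2"] by (simp add: B1_def algebra_simps)
        have ee: "\<epsilon> * zeta x \<le> 3 * \<epsilon> * zeta x" using \<epsilon> zeta_pos[of x] by simp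
        have tri: "\<bar>L * (t - x)^2 + e t - e x\<bar> \<le> \<bar>L * (t - x)^2\<bar> + \<bar>e t\<bar> + \<bar>e x\<bar>" by linarith
        show ?thesis unfolding id using tri et ex Lb bb ee by linarith
      qed
    qed
    then show ?thesis using cb by blast
  next
    case False
    have "\<bar>\<Phi> t - \<Phi> x - 0 * (t - x)\<bar> \<le> 3 * \<epsilon> * zeta x + B * (t - x)^2" if t: "t \<ge> 0" for t
    proof (cases "\<bar>t - x\<bar> < d")
      case True
      then have "dist (\<Phi> t) (\<Phi> x) < \<epsilon>"
        using False x t d by (intro ucont) (auto simp: dist_real_def)
      moreover have "\<epsilon> \<le> 3 * \<epsilon> * zeta x" using \<epsilon> zeta_ge2[OF x] by simp
      moreover have "B * (t - x)^2 \<ge> 0" using B0 by simp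
      ultimately show ?thesis by (simp add: dist_real_def)
    next
      case False': False
      have "d^2 \<le> \<bar>t - x\<bar>^2" using False' d by (intro power_mono) auto
      then have sq: "(t - x)^2 \<ge> d^2" by simp
      have d2: "d^2 > 0" using d by simp
      have zx: "zeta x \<le> 1 + 4 * A^2"
      proof -
        have "x^2 \<le> (2*A)^2" using False x by (intro power_mono) auto
        then show ?thesis by (simp add: zeta_def power_mult_distrib)
      qed
      have zx2: "zeta x \<le> (1 + 4 * A^2) / d^2 * (t - x)^2"
      proof -
        have "(1 + 4 * A^2) / d^2 * (t - x)^2 \<ge> (1 + 4 * A^2) / d^2 * d^2"
          using sq d2 by (intro mult_left_mono) auto
        then show ?thesis using zx d2 by simp
      qed
      have "\<bar>\<Phi> t - \<Phi> x\<bar> \<le> M * zeta t + M * zeta x" using M[OF t] M[OF x] by linarith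
      also have "\<dots> \<le> M * (2 * zeta x + 2 * (t - x)^2) + M * zeta x"
        using M0 zeta_shift by (intro add_mono mult_left_mono) auto
      also have "\<dots> = 3 * M * zeta x + 2 * M * (t - x)^2" by (simp add: algebra_simps)
      also have "\<dots> \<le> 3 * M * ((1 + 4 * A^2) / d^2 * (t - x)^2) + 2 * M * (t - x)^2"
        using zx2 M0 by (intro add_mono mult_left_mono) auto
      also have "\<dots> = B2 * (t - x)^2" by (simp add: B2_def algebra_simps)
      also have "\<dots> \<le> B * (t - x)^2" using B2 by (intro mult_right_mono) auto
      finally have fin: "\<bar>\<Phi> t - \<Phi> x\<bar> \<le> B * (t - x)^2" .
      have "0 \<le> 3 * \<epsilon> * zeta x" using \<epsilon> zeta_pos[of x] by simp
      then show ?thesis using fin by simp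
    qed
    then show ?thesis by (intro exI[of _ 0]) (simp add: zeta_pos less_imp_le)
  qed
  show ?thesis using B0 main by blast
qed



lemma adm_of: "\<Phi> \<in> C_zeta_star \<Longrightarrow> adm \<Phi>"
  unfolding C_zeta_star_def C_zeta_def B_zeta_def adm_def by blast

lemma unif:
  fixes \<alpha> \<beta> \<epsilon> :: real and \<Phi> :: "real \<Rightarrow> real"
  assumes al: "\<alpha> > -1" and b: "\<beta> > 0" and \<Phi>: "\<Phi> \<in> C_zeta_star" and \<epsilon>: "0 < \<epsilon>" "\<epsilon> \<le> 1"
  shows "\<exists>N. \<forall>\<eta>\<ge>N. \<forall>x\<ge>0. \<bar>Rop \<alpha> \<beta> \<eta> \<Phi> x - \<Phi> x\<bar> \<le> 4 * \<epsilon> * zeta x"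
proof -
  have ad: "adm \<Phi>" using adm_of[OF \<Phi>] .
  obtain L where lim: "((\<lambda>x. \<Phi> x / zeta x) \<longlongrightarrow> L) at_top"
    using \<Phi> unfolding C_zeta_star_def by blast
  obtain B where B0: "B \<ge> 0" and Bp: "\<And>x. x \<ge> 0 \<Longrightarrow> \<exists>c. \<bar>c\<bar> \<le> 2 * \<bar>L\<bar> * zeta x \<and>
            (\<forall>t\<ge>0. \<bar>\<Phi> t - \<Phi> x - c * (t - x)\<bar> \<le> 3 * \<epsilon> * zeta x + B * (t - x)^2)"
    using local_bound[OF ad lim \<epsilon>] by blast
  define r where "r = \<alpha> + 1"
  have r: "r > 0" using al by (simp add: r_def)
  define Q where "Q = r^2 + 2*r + r/\<beta>"
  have Q: "Q \<ge> 0" using r b by (simp add: Q_def)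
  define K where "K = 2 * \<bar>L\<bar> * r + B * (3 + 1/\<beta>) + B * Q"
  have K: "K \<ge> 0" using r b B0 Q by (simp add: K_def)
  define N where "N = max 1 (K / \<epsilon>)"
  have "\<bar>Rop \<alpha> \<beta> \<eta> \<Phi> x - \<Phi> x\<bar> \<le> 4 * \<epsilon> * zeta x" if et: "\<eta> \<ge> N" and x: "x \<ge> 0" for \<eta> x
  proof -
    have e1: "\<eta> \<ge> 1" using et by (simp add: N_def)
    then have e: "\<eta> > 0" by simp
    have eK: "K / \<eta> \<le> \<epsilon>"
    proof -
      have "K / \<epsilon> \<le> \<eta>" using et by (simp add: N_def)
      then have "K \<le> \<epsilon> * \<eta>" using \<epsilon> by (simp add: pos_divide_le_eq mult.commute)
      then show ?thesis using e by (simp add: pos_divide_le_eq)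
    qed
    obtain c where c: "\<bar>c\<bar> \<le> 2 * \<bar>L\<bar> * zeta x"
      and hyp: "\<And>t. t \<ge> 0 \<Longrightarrow> \<bar>\<Phi> t - \<Phi> x - c * (t - x)\<bar> \<le> 3 * \<epsilon> * zeta x + B * (t - x)^2"
      using Bp[OF x] by blast
    have ks: "\<bar>RR \<alpha> \<beta> \<eta> x \<Phi> - \<Phi> x\<bar> \<le> \<bar>c\<bar> * (r / \<eta>) + 3 * \<epsilon> * zeta x
           + B * ((3 + 1/\<beta>) * x / \<eta> + Q / \<eta>^2)"
      using kor_step[OF al b e x ad B0 hyp] by (simp add: r_def Q_def)
    have z: "1 \<le> zeta x" "x \<le> zeta x" using zeta_ge2[OF x] by auto
    have t1: "\<bar>c\<bar> * (r / \<eta>) \<le> (2 * \<bar>L\<bar> * r) * (zeta x / \<eta>)"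
    proof -
      have "\<bar>c\<bar> * (r / \<eta>) \<le> (2 * \<bar>L\<bar> * zeta x) * (r / \<eta>)" using c r e by (intro mult_right_mono) auto
      then show ?thesis by (simp add: field_simps)
    qed
    have t2a: "(3 + 1/\<beta>) * x / \<eta> \<le> (3 + 1/\<beta>) * (zeta x / \<eta>)"
      using z e b by (simp add: divide_right_mono mult_left_mono)
    have t2b: "Q / \<eta>^2 \<le> Q * (zeta x / \<eta>)"
    proof -
      have "Q / \<eta>^2 \<le> Q / \<eta>" using Q e e1 by (intro divide_left_mono) (auto simp: power2_eq_square)
      also have "\<dots> = Q * (1 / \<eta>)" by simp
      also have "\<dots> \<le> Q * (zeta x / \<eta>)" using Q e z by (intro mult_left_mono divide_right_mono) auto
      finally show ?thesis .
    qed
    have t2: "B * ((3 + 1/\<beta>) * x / \<eta> + Q / \<eta>^2) \<le> (B * (3 + 1/\<beta>) + B * Q) * (zeta x / \<eta>)"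
    proof -
      have "B * ((3 + 1/\<beta>) * x / \<eta> + Q / \<eta>^2) \<le> B * ((3 + 1/\<beta>) * (zeta x / \<eta>) + Q * (zeta x / \<eta>))"
        using t2a t2b B0 by (intro mult_left_mono) auto
      then show ?thesis by (simp add: algebra_simps)
    qed
    have t3: "K * (zeta x / \<eta>) \<le> \<epsilon> * zeta x"
    proof -
      have "K * (zeta x / \<eta>) = (K / \<eta>) * zeta x" by simp
      also have "\<dots> \<le> \<epsilon> * zeta x" using eK zeta_pos[of x] by (intro mult_right_mono) auto
      finally show ?thesis .
    qed
    have "K * (zeta x / \<eta>) = (2 * \<bar>L\<bar> * r) * (zeta x / \<eta>) + (B * (3 + 1/\<beta>) + B * Q) * (zeta x / \<eta>)"
      by (simp add: K_def algebra_simps)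
    then have "\<bar>RR \<alpha> \<beta> \<eta> x \<Phi> - \<Phi> x\<bar> \<le> 4 * \<epsilon> * zeta x" using ks t1 t2 t3 by linarith
    then show ?thesis using Rop_RR[OF al b e x ad] by simp
  qed
  then show ?thesis by blast
qed

theorem theorem7:
  fixes \<alpha> \<beta> :: real and \<Phi> :: "real \<Rightarrow> real"
  assumes "\<alpha> > -1" and "\<beta> > 0" and "\<Phi> \<in> C_zeta_star"
  shows "(\<forall>\<^sub>F \<eta> in at_top. (\<lambda>x. Rop \<alpha> \<beta> \<eta> \<Phi> x - \<Phi> x) \<in> B_zeta)
       \<and> ((\<lambda>\<eta>. zeta_norm (\<lambda>x. Rop \<alpha> \<beta> \<eta> \<Phi> x - \<Phi> x)) \<longlongrightarrow> 0) at_top"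
proof
  obtain N where N: "\<And>\<eta> x. \<eta> \<ge> N \<Longrightarrow> x \<ge> 0 \<Longrightarrow> \<bar>Rop \<alpha> \<beta> \<eta> \<Phi> x - \<Phi> x\<bar> \<le> 4 * 1 * zeta x"
    using unif[OF assms, of 1] by auto
  show "\<forall>\<^sub>F \<eta> in at_top. (\<lambda>x. Rop \<alpha> \<beta> \<eta> \<Phi> x - \<Phi> x) \<in> B_zeta"
    unfolding eventually_at_top_linorder B_zeta_def using N by fastforce
next
  show "((\<lambda>\<eta>. zeta_norm (\<lambda>x. Rop \<alpha> \<beta> \<eta> \<Phi> x - \<Phi> x)) \<longlongrightarrow> 0) at_top"
  proof (rule tendstoI)
    fix e :: real assume e: "e > 0"
    define \<epsilon> where "\<epsilon> = min (e/8) 1"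
    have \<epsilon>: "0 < \<epsilon>" "\<epsilon> \<le> 1" "4 * \<epsilon> < e" using e by (auto simp: \<epsilon>_def)
    obtain N where N: "\<And>\<eta> x. \<eta> \<ge> N \<Longrightarrow> x \<ge> 0 \<Longrightarrow> \<bar>Rop \<alpha> \<beta> \<eta> \<Phi> x - \<Phi> x\<bar> \<le> 4 * \<epsilon> * zeta x"
      using unif[OF assms \<epsilon>(1,2)] by auto
    have "dist (zeta_norm (\<lambda>x. Rop \<alpha> \<beta> \<eta> \<Phi> x - \<Phi> x)) 0 < e" if et: "\<eta> \<ge> N" for \<eta>
    proof -
      have each: "\<bar>Rop \<alpha> \<beta> \<eta> \<Phi> x - \<Phi> x\<bar> / zeta x \<le> 4 * \<epsilon>" if "x \<in> {0..}" for x
        using N[OF et, of x] that zeta_pos[of x] by (simp add: pos_divide_le_eq)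
      have up: "zeta_norm (\<lambda>x. Rop \<alpha> \<beta> \<eta> \<Phi> x - \<Phi> x) \<le> 4 * \<epsilon>"
        unfolding zeta_norm_def by (rule cSUP_least) (use each in auto)
      have bdd: "bdd_above ((\<lambda>x. \<bar>Rop \<alpha> \<beta> \<eta> \<Phi> x - \<Phi> x\<bar> / zeta x) ` {0..})"
        using each by (intro bdd_aboveI2) auto
      have lo: "0 \<le> zeta_norm (\<lambda>x. Rop \<alpha> \<beta> \<eta> \<Phi> x - \<Phi> x)"
        unfolding zeta_norm_def by (rule cSUP_upper2[OF bdd, of 0]) (auto simp: zeta_pos less_imp_le)
      show ?thesis using up lo \<epsilon> by (simp add: dist_real_def)
    qed
    then show "\<forall>\<^sub>F \<eta> in at_top. dist (zeta_norm (\<lambda>x. Rop \<alpha> \<beta> \<eta> \<Phi> x - \<Phi> x)) 0 < e"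
      unfolding eventually_at_top_linorder by blast
  qed
qed

end
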